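(* For every finite sequence $\Gamma$ and formula $A$ of the $\nabla$-free language $\mathcal{L}=\{\wedge,\vee,\top,\bot,1,\otimes,\to\}$: $\Gamma\vdash_{\mathbf{FL}_l}A$ if and only if $\Gamma^{\nabla}\vdash_{\mathbf{STL}(N)}A^{\nabla}$.
   Context: Formulas of $\mathcal{L}_\nabla$ are built from variables and constants $1,\top,\bot$ by $\wedge,\vee,\otimes,\to$ and unary $\nabla$; $\mathcal{L}$ is the $\nabla$-free fragment. Sequents $\Gamma\Rightarrow A$ have $\Gamma$ a finite sequence; $\nabla\Gamma$ applies $\nabla$ to each member. $\mathbf{STL}$ has axioms $A\Rightarrow A$, $\Rightarrow1$, $\nabla1\Rightarrow1$, $\Gamma\Rightarrow\top$, $\Gamma,\bot,\Sigma\Rightarrow A$ and rules (premises / conclusion): cut: $\Gamma\Rightarrow A$, $\Pi,A,\Sigma\Rightarrow B$ / $\Pi,\Gamma,\Sigma\Rightarrow B$; $L\wedge$: $\Gamma,A,\Sigma\Rightarrow C$ / $\Gamma,A\wedge B,\Sigma\Rightarrow C$ and $\Gamma,B,\Sigma\Rightarrow C$ / $\Gamma,A\wedge B,\Sigma\Rightarrow C$; $R\wedge$: $\Gamma\Rightarrow A$, $\Gamma\Rightarrow B$ / $\Gamma\Rightarrow A\wedge B$; $L\vee$: $\Gamma,A,\Sigma\Rightarrow C$, $\Gamma,B,\Sigma\Rightarrow C$ / $\Gamma,A\vee B,\Sigma\Rightarrow C$; $R\vee$: $\Gamma\Rightarrow A$ / $\Gamma\Rightarrow A\vee B$ and $\Gamma\Rightarrow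 B$ / $\Gamma\Rightarrow A\vee B$; $L1$: $\Gamma,\Sigma\Rightarrow A$ / $\Gamma,1,\Sigma\Rightarrow A$; $L\otimes$: $\Gamma,A,B,\Sigma\Rightarrow C$ / $\Gamma,A\otimes B,\Sigma\Rightarrow C$; $R\otimes$: $\Gamma\Rightarrow A$, $\Sigma\Rightarrow B$ / $\Gamma,\Sigma\Rightarrow A\otimes B$; $(\nabla)$: $A\Rightarrow B$ / $\nabla A\Rightarrow\nabla B$; Oplax: $\nabla A,\nabla B\Rightarrow C$ / $\nabla(A\otimes B)\Rightarrow C$; $L\to$: $\Gamma\Rightarrow A$, $\Pi,B,\Sigma\Rightarrow C$ / $\Pi,\Gamma,\nabla(A\to B),\Sigma\Rightarrow C$; $R\to$: $A,\nabla\Gamma\Rightarrow B$ / $\Gamma\Rightarrow A\to B$. Schemes: $(N)$: $\Gamma\Rightarrow A$ / $\nabla\Gamma\Rightarrow\nabla A$; $(P)$: $\Gamma\Rightarrow\nabla A$ / $\Gamma\Rightarrow A$; $(F)$: $\Gamma\Rightarrow A$ / $\Gamma\Rightarrow\nabla A$. $\mathbf{STL}(N)$ is $\mathbf{STL}$ plus $(N)$, and $\mathbf{FL}_l$ is $\mathbf{STL}$ plus $(P)$ and $(F)$. Writing $\Box A$ for $1\to A$, the translation $(-)^\nabla:\mathcal{L}\to\mathcal{L}_\nabla$ is: $p^\nabla=\nabla\Box p$ for variables $p$, $\bot^\nabla=\bot$, $\top^\nabla=\nabla\Box\top$, $1^\nabla=1$, $(A\wedge B)^\nabla=\nabla\Box(A^\nabla\wedge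 B^\nabla)$, $(A\vee B)^\nabla=A^\nabla\vee B^\nabla$, $(A\otimes B)^\nabla=A^\nabla\otimes B^\nabla$, $(A\to B)^\nabla=\nabla(A^\nabla\to B^\nabla)$; $\Gamma^\nabla$ translates each member of $\Gamma$. *)

theory Defs
  imports Main
begin

datatype fm =
    Var nat
  | One
  | Top
  | Bot
  | And fm fm
  | Or fm fm
  | Tens fm fm
  | Imp fm fm
  | Nab fm

fun nabla_free :: "fm \<Rightarrow> bool" where
  "nabla_free (Var p) = True"
| "nabla_free One = True"
| "nabla_free Top = True"
| "nabla_free Bot = True"
| "nabla_free (And a b) = (nabla_free a \<and> nabla_free b)"
| "nabla_free (Or a b) = (nabla_free a \<and> nabla_free b)"
| "nabla_free (Tens a b) = (nabla_free a \<and> nabla_free b)"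
| "nabla_free (Imp a b) = (nabla_free a \<and> nabla_free b)"
| "nabla_free (Nab a) = False"

text \<open>Derivability in STL extended by the optional schemes:
  useN enables (N); usePF enables both (P) and (F).\<close>
inductive deriv :: "bool \<Rightarrow> bool \<Rightarrow> fm list \<Rightarrow> fm \<Rightarrow> bool"
  for useN usePF :: bool where
  ax_id: "deriv useN usePF [A] A"
| ax_one: "deriv useN usePF [] One"
| ax_nab_one: "deriv useN usePF [Nab One] One"
| ax_top: "deriv useN usePF \<Gamma> Top"
| ax_bot: "deriv useN usePF (\<Gamma> @ [Bot] @ \<Sigma>) A"
| cut: "deriv useN usePF \<Gamma> A \<Longrightarrow> deriv useN usePF (\<Pi> @ [A] @ \<Sigma>) B
         \<Longrightarrow> deriv useN usePF (\<Pi> @ \<Gamma> @ \<Sigma>) B"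
| and_L1: "deriv useN usePF (\<Gamma> @ [A] @ \<Sigma>) C \<Longrightarrow> deriv useN usePF (\<Gamma> @ [And A B] @ \<Sigma>) C"
| and_L2: "deriv useN usePF (\<Gamma> @ [B] @ \<Sigma>) C \<Longrightarrow> deriv useN usePF (\<Gamma> @ [And A B] @ \<Sigma>) C"
| and_R: "deriv useN usePF \<Gamma> A \<Longrightarrow> deriv useN usePF \<Gamma> B \<Longrightarrow> deriv useN usePF \<Gamma> (And A B)"
| or_L: "deriv useN usePF (\<Gamma> @ [A] @ \<Sigma>) C \<Longrightarrow> deriv useN usePF (\<Gamma> @ [B] @ \<Sigma>) C
         \<Longrightarrow> deriv useN usePF (\<Gamma> @ [Or A B] @ \<Sigma>) C"
| or_R1: "deriv useN usePF \<Gamma> A \<Longrightarrow> deriv useN usePF \<Gamma> (Or A B)"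
| or_R2: "deriv useN usePF \<Gamma> B \<Longrightarrow> deriv useN usePF \<Gamma> (Or A B)"
| one_L: "deriv useN usePF (\<Gamma> @ \<Sigma>) A \<Longrightarrow> deriv useN usePF (\<Gamma> @ [One] @ \<Sigma>) A"
| tens_L: "deriv useN usePF (\<Gamma> @ [A, B] @ \<Sigma>) C \<Longrightarrow> deriv useN usePF (\<Gamma> @ [Tens A B] @ \<Sigma>) C"
| tens_R: "deriv useN usePF \<Gamma> A \<Longrightarrow> deriv useN usePF \<Sigma> B \<Longrightarrow> deriv useN usePF (\<Gamma> @ \<Sigma>) (Tens A B)"
| nab: "deriv useN usePF [A] B \<Longrightarrow> deriv useN usePF [Nab A] (Nab B)"
| oplax: "deriv useN usePF [Nab A, Nab B] C \<Longrightarrow> deriv useN usePF [Nab (Tens A B)] C"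
| imp_L: "deriv useN usePF \<Gamma> A \<Longrightarrow> deriv useN usePF (\<Pi> @ [B] @ \<Sigma>) C
         \<Longrightarrow> deriv useN usePF (\<Pi> @ \<Gamma> @ [Nab (Imp A B)] @ \<Sigma>) C"
| imp_R: "deriv useN usePF (A # map Nab \<Gamma>) B \<Longrightarrow> deriv useN usePF \<Gamma> (Imp A B)"
| sch_N: "useN \<Longrightarrow> deriv useN usePF \<Gamma> A \<Longrightarrow> deriv useN usePF (map Nab \<Gamma>) (Nab A)"
| sch_P: "usePF \<Longrightarrow> deriv useN usePF \<Gamma> (Nab A) \<Longrightarrow> deriv useN usePF \<Gamma> A"
| sch_F: "usePF \<Longrightarrow> deriv useN usePF \<Gamma> A \<Longrightarrow> deriv useN usePF \<Gamma> (Nab A)"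

abbreviation STL_N :: "fm list \<Rightarrow> fm \<Rightarrow> bool" where
  "STL_N \<equiv> deriv True False"

abbreviation FL_l :: "fm list \<Rightarrow> fm \<Rightarrow> bool" where
  "FL_l \<equiv> deriv False True"

definition Box :: "fm \<Rightarrow> fm" where
  "Box A = Imp One A"

fun nabla_tr :: "fm \<Rightarrow> fm" where
  "nabla_tr (Var p) = Nab (Box (Var p))"
| "nabla_tr Bot = Bot"
| "nabla_tr Top = Nab (Box Top)"
| "nabla_tr One = One"
| "nabla_tr (And A B) = Nab (Box (And (nabla_tr A) (nabla_tr B)))"
| "nabla_tr (Or A B) = Or (nabla_tr A) (nabla_tr B)"
| "nabla_tr (Tens A B) = Tens (nabla_tr A) (nabla_tr B)"
| "nabla_tr (Imp A B) = Nab (Imp (nabla_tr A) (nabla_tr B))"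
| "nabla_tr (Nab A) = Nab (nabla_tr A)" \<comment> \<open>not used: translation only applied to nabla-free formulas\<close>

end

theory Submission
  imports Defs
begin

fun tr :: "fm \<Rightarrow> fm" where
  "tr (Var p) = Nab (Box (Var p))"
| "tr Bot = Bot"
| "tr Top = Nab (Box Top)"
| "tr One = One"
| "tr (And A B) = Nab (Box (And (tr A) (tr B)))"
| "tr (Or A B) = Or (tr A) (tr B)"
| "tr (Tens A B) = Tens (tr A) (tr B)"
| "tr (Imp A B) = Nab (Imp (tr A) (tr B))"
| "tr (Nab A) = tr A"

lemma tr_nf: "nabla_free A \<Longrightarrow> tr A = nabla_tr A"
  by (induction A) auto

fun er :: "fm \<Rightarrow> fm" where
  "er (Var p) = Var p"
| "er Bot = Bot"
| "er Top = Top"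
| "er One = One"
| "er (And A B) = And (er A) (er B)"
| "er (Or A B) = Or (er A) (er B)"
| "er (Tens A B) = Tens (er A) (er B)"
| "er (Imp A B) = Imp (er A) (er B)"
| "er (Nab A) = er A"

fun good :: "fm \<Rightarrow> bool" where
  "good (Nab _) = True"
| "good Bot = True"
| "good One = True"
| "good (Or X Y) = (good X \<and> good Y)"
| "good (Tens X Y) = (good X \<and> good Y)"
| "good _ = False"

fun sz :: "fm \<Rightarrow> nat" where
  "sz (Or X Y) = Suc (sz X + sz Y)"
| "sz (Tens X Y) = Suc (sz X + sz Y)"
| "sz One = 1"
| "sz Bot = 1"
| "sz _ = 0"

fun isNab :: "fm \<Rightarrow> bool" where
  "isNab (Nab _) = True"
| "isNab _ = False"

fun unNab :: "fm \<Rightarrow> fm" where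
  "unNab (Nab A) = A"
| "unNab A = A"

lemma good_tr: "good (tr A)"
  by (induction A) auto

lemma cut1: "deriv u v [X] Y \<Longrightarrow> deriv u v (\<Gamma> @ Y # \<Sigma>) C \<Longrightarrow> deriv u v (\<Gamma> @ X # \<Sigma>) C"
  using deriv.cut[of u v "[X]" Y \<Gamma> \<Sigma> C] by simp

lemma cut0: "deriv u v \<Gamma> A \<Longrightarrow> deriv u v [A] B \<Longrightarrow> deriv u v \<Gamma> B"
  using deriv.cut[of u v \<Gamma> A "[]" "[]" B] by simp

lemma cutL: "deriv u v \<Delta> Y \<Longrightarrow> deriv u v (\<Gamma> @ Y # \<Sigma>) C \<Longrightarrow> deriv u v (\<Gamma> @ \<Delta> @ \<Sigma>) C"
  using deriv.cut[of u v \<Delta> Y \<Gamma> \<Sigma> C] by simp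

lemma boxE: "deriv u v [Nab (Box X)] X"
proof -
  have "deriv u v ([] @ [X] @ []) X" by (simp add: deriv.ax_id)
  from deriv.imp_L[OF deriv.ax_one this] show ?thesis by (simp add: Box_def)
qed

lemma boxI: "STL_N (map Nab \<Delta>) X \<Longrightarrow> STL_N (map Nab \<Delta>) (Nab (Box X))"
proof -
  assume "STL_N (map Nab \<Delta>) X"
  then have "STL_N ([] @ [One] @ map Nab \<Delta>) X" using deriv.one_L[of True False "[]" "map Nab \<Delta>" X] by simp
  then have "STL_N \<Delta> (Imp One X)" by (intro deriv.imp_R) simp
  then show ?thesis unfolding Box_def by (intro deriv.sch_N) auto
qed

lemma goodG:
  assumes "list_all good \<Gamma>" "P \<Gamma>"
  and orP: "\<And>\<Gamma>1 \<Gamma>2 X Y. P (\<Gamma>1 @ Or X Y # \<Gamma>2) \<Longrightarrow> P (\<Gamma>1 @ X # \<Gamma>2) \<and> P (\<Gamma>1 @ Y # \<Gamma>2)"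
  and tensP: "\<And>\<Gamma>1 \<Gamma>2 X Y. P (\<Gamma>1 @ Tens X Y # \<Gamma>2) \<Longrightarrow> P (\<Gamma>1 @ X # Y # \<Gamma>2)"
  and oneP: "\<And>\<Gamma>1 \<Gamma>2. P (\<Gamma>1 @ One # \<Gamma>2) \<Longrightarrow> P (\<Gamma>1 @ \<Gamma>2)"
  and base: "\<And>\<Delta>. P (map Nab \<Delta>) \<Longrightarrow> deriv u v (map Nab \<Delta>) R"
  shows "deriv u v \<Gamma> R"
  using assms(1,2)
proof (induction "sum_list (map sz \<Gamma>)" arbitrary: \<Gamma> rule: less_induct)
  case less
  show ?case
  proof (cases "\<forall>X\<in>set \<Gamma>. isNab X")
    case True
    then have "\<Gamma> = map Nab (map unNab \<Gamma>)"
      by (induction \<Gamma>) (auto elim: isNab.elims)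
    then show ?thesis using base less.prems by metis
  next
    case False
    then obtain X where X: "X \<in> set \<Gamma>" "\<not> isNab X" by blast
    then obtain G1 G2 where G: "\<Gamma> = G1 @ X # G2" by (metis split_list)
    have gX: "good X" "list_all good G1" "list_all good G2" using less.prems(1) G by auto
    show ?thesis
    proof (cases X)
      case Bot
      then show ?thesis using G deriv.ax_bot[of u v G1 G2 R] by simp
    next
      case One
      have "deriv u v (G1 @ G2) R"
        using less.hyps[of "G1 @ G2"] less.prems G One gX oneP by simp
      then show ?thesis using G One deriv.one_L[of u v G1 G2 R] by simp
    next
      case (Or A B)
      have "deriv u v (G1 @ A # G2) R" "deriv u v (G1 @ B # G2) R"
        using less.hyps[of "G1 @ A # G2"] less.hyps[of "G1 @ B # G2"] less.prems G Or gX orP[of G1 A B G2]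
        by auto
      then show ?thesis using G Or deriv.or_L[of u v G1 A G2 R B] by simp
    next
      case (Tens A B)
      have "deriv u v (G1 @ A # B # G2) R"
        using less.hyps[of "G1 @ A # B # G2"] less.prems G Tens gX tensP[of G1 A B G2]
        by auto
      then show ?thesis using G Tens deriv.tens_L[of u v G1 A B G2 R] by simp
    qed (use gX X in auto)
  qed
qed

lemma or_dec1: "deriv u v (G1 @ Or X Y # G2) C \<Longrightarrow> deriv u v (G1 @ X # G2) C"
  by (rule cut1[OF deriv.or_R1[OF deriv.ax_id]])
lemma or_dec2: "deriv u v (G1 @ Or X Y # G2) C \<Longrightarrow> deriv u v (G1 @ Y # G2) C"
  by (rule cut1[OF deriv.or_R2[OF deriv.ax_id]])
lemma tens_dec: "deriv u v (G1 @ Tens X Y # G2) C \<Longrightarrow> deriv u v (G1 @ X # Y # G2) C"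
  using cutL[OF deriv.tens_R[OF deriv.ax_id deriv.ax_id, of u v X Y], of G1 G2 C] by simp
lemma one_dec: "deriv u v (G1 @ One # G2) C \<Longrightarrow> deriv u v (G1 @ G2) C"
  using cutL[OF deriv.ax_one, of u v G1 G2 C] by simp

lemma goodD:
  assumes "list_all good \<Gamma>" "deriv u v (\<Theta> @ \<Gamma>) C"
  and base: "\<And>\<Delta>. deriv u v (\<Theta> @ map Nab \<Delta>) C \<Longrightarrow> deriv u v (map Nab \<Delta>) R"
  shows "deriv u v \<Gamma> R"
proof (rule goodG[where P="\<lambda>\<Delta>. deriv u v (\<Theta> @ \<Delta>) C"])
  show "list_all good \<Gamma>" by (rule assms(1))
  show "deriv u v (\<Theta> @ \<Gamma>) C" by (rule assms(2))
  fix G1 G2 X Y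
  show "deriv u v (\<Theta> @ G1 @ Or X Y # G2) C \<Longrightarrow>
       deriv u v (\<Theta> @ G1 @ X # G2) C \<and> deriv u v (\<Theta> @ G1 @ Y # G2) C"
    using or_dec1[of u v "\<Theta> @ G1" X Y G2 C] or_dec2[of u v "\<Theta> @ G1" X Y G2 C] by simp
  show "deriv u v (\<Theta> @ G1 @ Tens X Y # G2) C \<Longrightarrow> deriv u v (\<Theta> @ G1 @ X # Y # G2) C"
    using tens_dec[of u v "\<Theta> @ G1" X Y G2 C] by simp
next
  fix G1 G2
  show "deriv u v (\<Theta> @ G1 @ One # G2) C \<Longrightarrow> deriv u v (\<Theta> @ G1 @ G2) C"
    using one_dec[of u v "\<Theta> @ G1" G2 C] by simp
next
  fix \<Delta>
  show "deriv u v (\<Theta> @ map Nab \<Delta>) C \<Longrightarrow> deriv u v (map Nab \<Delta>) R" by (rule base)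
qed

lemma good_map_tr: "list_all good (map tr \<Gamma>)"
  by (induction \<Gamma>) (auto simp: good_tr)

lemma map_tr_Nab: "map tr (map Nab \<Gamma>) = map tr \<Gamma>"
  by (induction \<Gamma>) auto

lemma map_er_Nab: "map er (map Nab \<Gamma>) = map er \<Gamma>"
  by (induction \<Gamma>) auto

lemma andL1': "deriv u v [And A B] A"
  using deriv.and_L1[of u v "[]" A "[]" A B] deriv.ax_id by simp
lemma andL2': "deriv u v [And A B] B"
  using deriv.and_L2[of u v "[]" B "[]" B A] deriv.ax_id by simp

lemma fwd: "deriv False True \<Gamma> A \<Longrightarrow> STL_N (map tr \<Gamma>) (tr A)"
proof (induction rule: deriv.induct)
  case (ax_id A)
  then show ?case by (simp add: deriv.ax_id)
next
  case ax_one
  then show ?case by (simp add: deriv.ax_one)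
next
  case ax_nab_one
  then show ?case by (simp add: deriv.ax_id)
next
  case (ax_top \<Gamma>)
  have "STL_N (map tr \<Gamma>) (Nab (Box Top))"
    by (rule goodD[where \<Theta>="[]" and C=Top]) (simp_all add: good_map_tr boxI deriv.ax_top)
  then show ?case by simp
next
  case (ax_bot \<Gamma> \<Sigma> A)
  then show ?case using deriv.ax_bot[of True False "map tr \<Gamma>" "map tr \<Sigma>"] by simp
next
  case (cut \<Gamma> A \<Pi> \<Sigma> B)
  then show ?case using cutL[OF cut.IH(1), of "map tr \<Pi>" "map tr \<Sigma>"] by simp
next
  case (and_L1 \<Gamma> A \<Sigma> C B)
  have "STL_N [Nab (Box (And (tr A) (tr B)))] (tr A)" by (rule cut0[OF boxE andL1'])
  then show ?case using cut1 and_L1.IH by simp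
next
  case (and_L2 \<Gamma> B \<Sigma> C A)
  have "STL_N [Nab (Box (And (tr A) (tr B)))] (tr B)" by (rule cut0[OF boxE andL2'])
  then show ?case using cut1 and_L2.IH by simp
next
  case (and_R \<Gamma> A B)
  have "STL_N (map tr \<Gamma>) (Nab (Box (And (tr A) (tr B))))"
    by (rule goodD[where \<Theta>="[]" and C="And (tr A) (tr B)"])
       (simp_all add: good_map_tr boxI deriv.and_R and_R.IH)
  then show ?case by simp
next
  case (or_L \<Gamma> A \<Sigma> C B)
  then show ?case using deriv.or_L[of True False "map tr \<Gamma>" "tr A" "map tr \<Sigma>" "tr C" "tr B"] by simp
next
  case (or_R1 \<Gamma> A B)
  then show ?case by (simp add: deriv.or_R1)
next
  case (or_R2 \<Gamma> B A)
  then show ?case by (simp add: deriv.or_R2)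
next
  case (one_L \<Gamma> \<Sigma> A)
  then show ?case using deriv.one_L[of True False "map tr \<Gamma>" "map tr \<Sigma>"] by simp
next
  case (tens_L \<Gamma> A B \<Sigma> C)
  then show ?case using deriv.tens_L[of True False "map tr \<Gamma>" "tr A" "tr B"] by simp
next
  case (tens_R \<Gamma> A \<Sigma> B)
  then show ?case using deriv.tens_R[of True False "map tr \<Gamma>" "tr A" "map tr \<Sigma>" "tr B"] by simp
next
  case (nab A B)
  then show ?case by simp
next
  case (oplax A B C)
  then show ?case using deriv.tens_L[of True False "[]" "tr A" "tr B" "[]" "tr C"] by simp
next
  case (imp_L \<Gamma> A \<Pi> B \<Sigma> C)
  then show ?case using deriv.imp_L[of True False "map tr \<Gamma>" "tr A" "map tr \<Pi>" "tr B" "map tr \<Sigma>"] by simp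
next
  case (imp_R A \<Gamma> B)
  have IH: "STL_N (tr A # map tr \<Gamma>) (tr B)" using imp_R.IH by (simp add: comp_def)
  have b: "STL_N (map Nab \<Delta>) (Nab (Imp (tr A) (tr B)))" if "STL_N (tr A # map Nab \<Delta>) (tr B)" for \<Delta>
    using deriv.sch_N[OF _ deriv.imp_R[OF that]] by simp
  have "STL_N (map tr \<Gamma>) (Nab (Imp (tr A) (tr B)))"
    by (rule goodD[where \<Theta>="[tr A]" and C="tr B"]) (simp_all add: good_map_tr IH b)
  then show ?case by simp
qed auto

lemma nab_ctx: "FL_l (\<Pi> @ \<Sigma> @ \<Omega>) C \<Longrightarrow> FL_l (\<Pi> @ map Nab \<Sigma> @ \<Omega>) C"
proof (induction \<Sigma> arbitrary: \<Pi>)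
  case Nil
  then show ?case by simp
next
  case (Cons X \<Sigma>)
  have a: "FL_l (\<Pi> @ X # (map Nab \<Sigma> @ \<Omega>)) C" using Cons.IH[of "\<Pi> @ [X]"] Cons.prems by simp
  have "FL_l [Nab X] X" by (rule deriv.sch_P[OF _ deriv.ax_id]) simp
  from cut1[OF this a] show ?case by simp
qed

lemma bwd: "deriv True False \<Gamma> A \<Longrightarrow> FL_l (map er \<Gamma>) (er A)"
proof (induction rule: deriv.induct)
  case (ax_id A)
  then show ?case by (simp add: deriv.ax_id)
next
  case ax_one
  then show ?case by (simp add: deriv.ax_one)
next
  case ax_nab_one
  then show ?case by (simp add: deriv.ax_id)
next
  case (ax_top \<Gamma>)
  show ?case by (simp add: deriv.ax_top)
next
  case (ax_bot \<Gamma> \<Sigma> A)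
  then show ?case using deriv.ax_bot[of False True "map er \<Gamma>" "map er \<Sigma>"] by simp
next
  case (cut \<Gamma> A \<Pi> \<Sigma> B)
  then show ?case using cutL[OF cut.IH(1), of "map er \<Pi>" "map er \<Sigma>"] by simp
next
  case (and_L1 \<Gamma> A \<Sigma> C B)
  then show ?case using deriv.and_L1[of False True "map er \<Gamma>" "er A" "map er \<Sigma>" "er C" "er B"] by simp
next
  case (and_L2 \<Gamma> B \<Sigma> C A)
  then show ?case using deriv.and_L2[of False True "map er \<Gamma>" "er B" "map er \<Sigma>" "er C" "er A"] by simp
next
  case (and_R \<Gamma> A B)
  then show ?case by (simp add: deriv.and_R)
next
  case (or_L \<Gamma> A \<Sigma> C B)
  then show ?case using deriv.or_L[of False True "map er \<Gamma>" "er A" "map er \<Sigma>" "er C" "er B"] by simp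
next
  case (or_R1 \<Gamma> A B)
  then show ?case by (simp add: deriv.or_R1)
next
  case (or_R2 \<Gamma> B A)
  then show ?case by (simp add: deriv.or_R2)
next
  case (one_L \<Gamma> \<Sigma> A)
  then show ?case using deriv.one_L[of False True "map er \<Gamma>" "map er \<Sigma>"] by simp
next
  case (tens_L \<Gamma> A B \<Sigma> C)
  then show ?case using deriv.tens_L[of False True "map er \<Gamma>" "er A" "er B"] by simp
next
  case (tens_R \<Gamma> A \<Sigma> B)
  then show ?case using deriv.tens_R[of False True "map er \<Gamma>" "er A" "map er \<Sigma>" "er B"] by simp
next
  case (nab A B)
  then show ?case by simp
next
  case (oplax A B C)
  then show ?case using deriv.tens_L[of False True "[]" "er A" "er B" "[]" "er C"] by simp
next
  case (imp_L \<Gamma> A \<Pi> B \<Sigma> C)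
  have "FL_l ((map er \<Pi> @ map er \<Gamma>) @ Nab (Imp (er A) (er B)) # map er \<Sigma>) (er C)"
    using deriv.imp_L[of False True "map er \<Gamma>" "er A" "map er \<Pi>" "er B" "map er \<Sigma>" "er C"] imp_L.IH by simp
  moreover have "FL_l [Imp (er A) (er B)] (Nab (Imp (er A) (er B)))"
    by (rule deriv.sch_F[OF _ deriv.ax_id]) simp
  ultimately show ?case using cut1 by fastforce
next
  case (imp_R A \<Gamma> B)
  have "FL_l ([er A] @ map er \<Gamma> @ []) (er B)" using imp_R.IH by (simp add: comp_def)
  from nab_ctx[OF this] have "FL_l (er A # map Nab (map er \<Gamma>)) (er B)" by simp
  then show ?case by (simp add: deriv.imp_R)
next
  case (sch_N \<Gamma> A)
  then show ?case by (simp add: comp_def)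
qed auto

lemma bx1: "FL_l [X] (Imp One X)"
proof -
  have "FL_l [Nab X] X" by (rule deriv.sch_P[OF _ deriv.ax_id]) simp
  then have "FL_l ([] @ [One] @ [Nab X]) X" using deriv.one_L[of False True "[]" "[Nab X]" X] by simp
  then show ?thesis by (intro deriv.imp_R) simp
qed

lemma bx2: "FL_l [Imp One X] X"
proof -
  have "FL_l [Nab (Imp One X)] X" using boxE[of False True X] by (simp add: Box_def)
  moreover have "FL_l [Imp One X] (Nab (Imp One X))" by (rule deriv.sch_F[OF _ deriv.ax_id]) simp
  ultimately show ?thesis using cut0 by blast
qed

lemma mono_and: "deriv u v [A] A' \<Longrightarrow> deriv u v [B] B' \<Longrightarrow> deriv u v [And A B] (And A' B')"
proof -
  assume a: "deriv u v [A] A'" and b: "deriv u v [B] B'"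
  show ?thesis by (rule deriv.and_R[OF cut0[OF andL1' a] cut0[OF andL2' b]])
qed

lemma mono_or: "deriv u v [A] A' \<Longrightarrow> deriv u v [B] B' \<Longrightarrow> deriv u v [Or A B] (Or A' B')"
  using deriv.or_L[of u v "[]" A "[]" "Or A' B'" B] deriv.or_R1 deriv.or_R2 by simp

lemma mono_tens: "deriv u v [A] A' \<Longrightarrow> deriv u v [B] B' \<Longrightarrow> deriv u v [Tens A B] (Tens A' B')"
  using deriv.tens_L[of u v "[]" A B "[]" "Tens A' B'"] deriv.tens_R[of u v "[A]" A' "[B]" B'] by simp

lemma mono_imp: "deriv u v [A'] A \<Longrightarrow> deriv u v [B] B' \<Longrightarrow> deriv u v [Imp A B] (Imp A' B')"
proof -
  assume a: "deriv u v [A'] A" and b: "deriv u v [B] B'"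
  have "deriv u v ([] @ [B] @ []) B'" using b by simp
  from deriv.imp_L[OF a this] have "deriv u v (A' # map Nab [Imp A B]) B'" by simp
  then show ?thesis by (rule deriv.imp_R)
qed

lemma equiv_tr: "nabla_free A \<Longrightarrow> FL_l [A] (er (nabla_tr A)) \<and> FL_l [er (nabla_tr A)] A"
proof (induction A)
  case (Var p)
  show ?case using bx1[of "Var p"] bx2[of "Var p"] by (simp add: Box_def)
next
  case One
  show ?case by (simp add: deriv.ax_id)
next
  case Top
  show ?case using bx1[of Top] bx2[of Top] by (simp add: Box_def)
next
  case Bot
  show ?case by (simp add: deriv.ax_id)
next
  case (And A B)
  then have h: "FL_l [A] (er (nabla_tr A))" "FL_l [er (nabla_tr A)] A"
     "FL_l [B] (er (nabla_tr B))" "FL_l [er (nabla_tr B)] B" by auto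
  have 1: "FL_l [And A B] (Imp One (And (er (nabla_tr A)) (er (nabla_tr B))))"
    by (rule cut0[OF mono_and[OF h(1) h(3)] bx1])
  have 2: "FL_l [Imp One (And (er (nabla_tr A)) (er (nabla_tr B)))] (And A B)"
    by (rule cut0[OF bx2 mono_and[OF h(2) h(4)]])
  show ?case using 1 2 by (simp add: Box_def)
next
  case (Or A B)
  then show ?case using mono_or by auto
next
  case (Tens A B)
  then show ?case using mono_tens by auto
next
  case (Imp A B)
  then show ?case using mono_imp by auto
next
  case (Nab A)
  then show ?case by simp
qed

lemma ctx_replace: "list_all2 (\<lambda>x y. FL_l [x] y) \<Gamma> \<Gamma>' \<Longrightarrow> FL_l (\<Pi> @ \<Gamma>' @ \<Omega>) C \<Longrightarrow> FL_l (\<Pi> @ \<Gamma> @ \<Omega>) C"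
proof (induction arbitrary: \<Pi> rule: list_all2_induct)
  case Nil
  then show ?case by simp
next
  case (Cons x xs y ys)
  have a: "FL_l (\<Pi> @ y # (xs @ \<Omega>)) C" using Cons.IH[of "\<Pi> @ [y]"] Cons.prems by simp
  from cut1[OF Cons.hyps(1) a] show ?case by simp
qed

theorem theorem7p14:
  assumes "list_all nabla_free \<Gamma>" and "nabla_free A"
  shows "FL_l \<Gamma> A \<longleftrightarrow> STL_N (map nabla_tr \<Gamma>) (nabla_tr A)"
proof
  have mt: "map tr \<Gamma> = map nabla_tr \<Gamma>" using assms(1) by (induction \<Gamma>) (auto simp: tr_nf)
  assume "FL_l \<Gamma> A"
  from fwd[OF this] show "STL_N (map nabla_tr \<Gamma>) (nabla_tr A)" using mt tr_nf[OF assms(2)] by simp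
next
  assume "STL_N (map nabla_tr \<Gamma>) (nabla_tr A)"
  from bwd[OF this] have d: "FL_l (map er (map nabla_tr \<Gamma>)) (er (nabla_tr A))" .
  have "FL_l (map er (map nabla_tr \<Gamma>)) A" using cut0[OF d] equiv_tr[OF assms(2)] by blast
  moreover have "list_all2 (\<lambda>x y. FL_l [x] y) \<Gamma> (map er (map nabla_tr \<Gamma>))"
    using assms(1) by (induction \<Gamma>) (auto dest: equiv_tr)
  ultimately show "FL_l \<Gamma> A" using ctx_replace[of \<Gamma> _ "[]" "[]" A] by simp
qed

end
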